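(* Let $\varrho:\mathbb R\to\mathbb R$ be bounded and locally Hölder with some exponent $\gamma>1/2$ on each compact interval, and fix $\bar y\in\mathbb R$. Write $x_{n,r}=\lfloor n\bar y\rfloor+\lfloor r\sqrt n\rfloor$ and $X^{(n,t,r)}=X^{x_{n,r}+\lfloor ntb\rfloor,\lfloor nt\rfloor}_{\lfloor nt\rfloor}$, and define \[ H^n(t,r)=\sum_{i\in\mathbb Z}\varrho(i/n)\Bigl(\mathbf 1\{i>x_{n,r}\}P^\omega\{i\le X^{(n,t,r)}\}-\mathbf 1\{i\le x_{n,r}\}P^\omega\{i>X^{(n,t,r)}\}\Bigr). \] Then for any $S,T<\infty$ and $\mathbb P$-almost every $\omega$, \[ \lim_{n\to\infty}\sup_{0\le t\le T,\,-S\le r\le S}n^{-1/4}\Bigl|H^n(t,r)-\varrho(\bar y)\,E^\omega\bigl(X^{(n,t,r)}-x_{n,r}\bigr)\Bigr|=0. \]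
   Context: Environment setup: Fix an integer $M\ge1$. $\mathcal P$ = probability vectors $u=(u(y):-M\le y\le M)$, with $u(y)=0$ for $|y|>M$. Environment $\omega=(\omega_{x,\tau})\in\Omega=\mathcal P^{\mathbb Z^2}$, $u^\omega_\tau(x,y)=\omega_{x,\tau}(y)$; under $\mathbb P$ the $\omega_{x,\tau}$ are i.i.d. $p(0,j)=\mathbb Eu_0(0,j)$. (A1) no integer $h>1$ and $x$ with $\sum_kp(0,x+kh)=1$; (A2) $\mathbb P\{\max_ju_0(0,j)<1\}>0$. Backward walk $X^{i,\tau}_s$: Markov chain under quenched $P^\omega$ (expectation $E^\omega$), $X^{i,\tau}_0=i$, $P^\omega(X^{i,\tau}_{s+1}=y\mid X^{i,\tau}_s=x)=u^\omega_{\tau-s}(x,y-x)$. $V=\sum_jjp(0,j)$, $b=-V$. *)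

theory Defs
  imports "HOL-Probability.Probability"
begin

definition probvec :: "int \<Rightarrow> (int \<Rightarrow> real) set" where
  "probvec M = {u. (\<forall>y. 0 \<le> u y) \<and> (\<forall>y. M < \<bar>y\<bar> \<longrightarrow> u y = 0)
                   \<and> (\<Sum>y\<in>{-M..M}. u y) = 1}"

definition envp :: "(int \<Rightarrow> real) measure \<Rightarrow> int \<Rightarrow> real" where
  "envp \<mu> j = (\<integral>u. u j \<partial>\<mu>)"

definition envV :: "(int \<Rightarrow> real) measure \<Rightarrow> int \<Rightarrow> real" where
  "envV \<mu> M = (\<Sum>j\<in>{-M..M}. of_int j * envp \<mu> j)"

text \<open>Quenched law of the backward walk:
  qprob w tau i s y = P^w(X^{i,tau}_s = y), with environment w (x,tau) = omega_{x,tau}.\<close>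
fun qprob :: "(int \<times> int \<Rightarrow> int \<Rightarrow> real) \<Rightarrow> int \<Rightarrow> int \<Rightarrow> nat \<Rightarrow> int \<Rightarrow> real" where
  "qprob w tau i 0 y = (if y = i then 1 else 0)"
| "qprob w tau i (Suc s) y = (\<Sum>\<^sub>\<infinity>x. qprob w tau i s x * w (x, tau - int s) (y - x))"

definition qP :: "(int \<times> int \<Rightarrow> int \<Rightarrow> real) \<Rightarrow> int \<Rightarrow> int \<Rightarrow> nat \<Rightarrow> int set \<Rightarrow> real" where
  "qP w tau i s A = (\<Sum>\<^sub>\<infinity>y\<in>A. qprob w tau i s y)"

definition xnr :: "real \<Rightarrow> nat \<Rightarrow> real \<Rightarrow> int" where
  "xnr ybar n r = \<lfloor>real n * ybar\<rfloor> + \<lfloor>r * sqrt (real n)\<rfloor>"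

text \<open>X^{(n,t,r)} = X^{x_{n,r} + floor(n t b), floor(n t)}_{floor(n t)}:
  starting point, time label tau and number of steps.\<close>
definition start :: "real \<Rightarrow> real \<Rightarrow> nat \<Rightarrow> real \<Rightarrow> real \<Rightarrow> int" where
  "start b ybar n t r = xnr ybar n r + \<lfloor>real n * t * b\<rfloor>"

definition tlab :: "nat \<Rightarrow> real \<Rightarrow> int" where
  "tlab n t = \<lfloor>real n * t\<rfloor>"

definition Hn :: "(real \<Rightarrow> real) \<Rightarrow> (int \<times> int \<Rightarrow> int \<Rightarrow> real) \<Rightarrow> real \<Rightarrow> real
                   \<Rightarrow> nat \<Rightarrow> real \<Rightarrow> real \<Rightarrow> real" where
  "Hn \<rho> w b ybar n t r =
     (let x = xnr ybar n r; i0 = start b ybar n t r; tau = tlab n t; s = nat (tlab n t)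
      in \<Sum>\<^sub>\<infinity>i::int. \<rho> (real_of_int i / real n) *
            ((if i > x then qP w tau i0 s {i..} else 0)
           - (if i \<le> x then qP w tau i0 s {..<i} else 0)))"

definition EXc :: "(int \<times> int \<Rightarrow> int \<Rightarrow> real) \<Rightarrow> real \<Rightarrow> real \<Rightarrow> nat \<Rightarrow> real \<Rightarrow> real \<Rightarrow> real" where
  "EXc w b ybar n t r =
     (\<Sum>\<^sub>\<infinity>y::int. real_of_int (y - xnr ybar n r) *
        qprob w (tlab n t) (start b ybar n t r) (nat (tlab n t)) y)"

end

theory Submission
  imports Defs "HOL-Real_Asymp.Real_Asymp"
begin

definition cl :: "real \<Rightarrow> real" where "cl z = max 0 (min 1 z)"

lemma cl_bounds: "0 \<le> cl z" "cl z \<le> 1" by (auto simp: cl_def)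
lemma cl_id: "0 \<le> z \<Longrightarrow> z \<le> 1 \<Longrightarrow> cl z = z" by (auto simp: cl_def)

fun qf :: "(int \<times> int \<Rightarrow> int \<Rightarrow> real) \<Rightarrow> int \<Rightarrow> int \<Rightarrow> int \<Rightarrow> nat \<Rightarrow> int \<Rightarrow> real" where
  "qf w M tau i 0 y = (if y = i then 1 else 0)"
| "qf w M tau i (Suc s) y = (\<Sum>j\<in>{-M..M}. qf w M tau i s (y - j) * cl (w (y - j, tau - int s) j))"

definition Rng :: "int \<Rightarrow> int \<Rightarrow> nat \<Rightarrow> int set" where
  "Rng M i s = {i - M * int s .. i + M * int s}"

lemma qf_nonneg: "0 \<le> qf w M tau i s y"
  by (induction s arbitrary: y) (auto intro!: sum_nonneg mult_nonneg_nonneg cl_bounds)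

lemma qf_bound: "M \<ge> 0 \<Longrightarrow> qf w M tau i s y \<le> (2 * real_of_int M + 1) ^ s"
proof (induction s arbitrary: y)
  case 0 then show ?case by auto
next
  case (Suc s)
  have "qf w M tau i (Suc s) y \<le> (\<Sum>j\<in>{-M..M}. (2 * real_of_int M + 1) ^ s)"
    unfolding qf.simps
  proof (rule sum_mono)
    fix j assume "j \<in> {-M..M}"
    have "qf w M tau i s (y - j) * cl (w (y - j, tau - int s) j) \<le> qf w M tau i s (y - j) * 1"
      by (intro mult_left_mono cl_bounds qf_nonneg)
    also have "\<dots> \<le> (2 * real_of_int M + 1) ^ s" using Suc by simp
    finally show "qf w M tau i s (y - j) * cl (w (y - j, tau - int s) j) \<le> (2 * real_of_int M + 1) ^ s" .
  qed
  also have "\<dots> = (2 * real_of_int M + 1) ^ Suc s"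
    using Suc.prems by (simp add: of_nat_nat)
  finally show ?case .
qed

lemma qf_supp: "M \<ge> 0 \<Longrightarrow> y \<notin> Rng M i s \<Longrightarrow> qf w M tau i s y = 0"
proof (induction s arbitrary: y)
  case 0 then show ?case by (auto simp: Rng_def)
next
  case (Suc s)
  have "qf w M tau i s (y - j) = 0" if "j \<in> {-M..M}" for j
    using Suc.prems that by (intro Suc.IH) (auto simp: Rng_def algebra_simps)
  then show ?case by simp
qed

lemma qf_dep:
  assumes "\<And>x t. tau - int s < t \<Longrightarrow> t \<le> tau \<Longrightarrow> w (x, t) = w' (x, t)"
  shows "qf w M tau i s y = qf w' M tau i s y"
  using assms
proof (induction s arbitrary: y)
  case 0 then show ?case by simp
next
  case (Suc s)
  have IH: "qf w M tau i s z = qf w' M tau i s z" for z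
    using Suc.prems by (intro Suc.IH) auto
  have "w (y - j, tau - int s) = w' (y - j, tau - int s)" for j
    using Suc.prems by auto
  then show ?case by (simp add: IH)
qed

lemma meas_coord:
  assumes sets: "sets \<mu> = sets (PiM (UNIV :: int set) (\<lambda>_. borel))"
  shows "(\<lambda>w. w k j) \<in> borel_measurable (PiM (UNIV :: (int \<times> int) set) (\<lambda>_. \<mu>))"
proof -
  have "(\<lambda>u. u j) \<in> borel_measurable (PiM (UNIV :: int set) (\<lambda>_. borel))" by simp
  then have "(\<lambda>u. u j) \<in> borel_measurable \<mu>"
    using measurable_cong_sets[OF sets refl, of borel] by metis
  moreover have "(\<lambda>w. w k) \<in> measurable (PiM (UNIV :: (int \<times> int) set) (\<lambda>_. \<mu>)) \<mu>"
    by (rule measurable_component_singleton) simp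
  ultimately show ?thesis by (rule measurable_compose[rotated])
qed

lemma cl_meas[measurable]: "cl \<in> borel_measurable borel"
  unfolding cl_def by measurable

lemma qf_meas:
  assumes sets: "sets \<mu> = sets (PiM (UNIV :: int set) (\<lambda>_. borel))"
  shows "(\<lambda>w. qf w M tau i s y) \<in> borel_measurable (PiM (UNIV :: (int \<times> int) set) (\<lambda>_. \<mu>))"
proof (induction s arbitrary: y)
  case 0 then show ?case by simp
next
  case (Suc s)
  have "(\<lambda>w. cl (w (y - j, tau - int s) j)) \<in> borel_measurable (PiM (UNIV :: (int \<times> int) set) (\<lambda>_. \<mu>))" for j
    using measurable_compose[OF meas_coord[OF sets] cl_meas] by simp
  then show ?case using Suc by (simp add: borel_measurable_sum borel_measurable_times)
qed


lemma sum_shift_supp: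
  fixes G :: "int \<Rightarrow> real"
  assumes "\<And>x. x \<notin> B \<Longrightarrow> G x = 0" "B \<subseteq> {a - j .. b - j}"
  shows "(\<Sum>y\<in>{a..b}. G (y - j)) = (\<Sum>x\<in>B. G x)"
proof -
  have "(\<Sum>y\<in>{a..b}. G (y - j)) = (\<Sum>x\<in>{a - j..b - j}. G x)"
    by (rule sum.reindex_bij_witness[of _ "\<lambda>x. x + j" "\<lambda>y. y - j"]) auto
  also have "\<dots> = (\<Sum>x\<in>B. G x)"
    using assms by (intro sum.mono_neutral_right) auto
  finally show ?thesis .
qed

lemma qf_rec_sum:
  assumes M: "M \<ge> 0"
  shows "(\<Sum>y\<in>Rng M i (Suc s). qf w M tau i (Suc s) y * H y) =
    (\<Sum>j\<in>{-M..M}. \<Sum>x\<in>Rng M i s. qf w M tau i s x * cl (w (x, tau - int s) j) * H (x + j))"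
proof -
  have "(\<Sum>y\<in>Rng M i (Suc s). qf w M tau i (Suc s) y * H y) =
     (\<Sum>y\<in>Rng M i (Suc s). \<Sum>j\<in>{-M..M}. qf w M tau i s (y - j) * cl (w (y - j, tau - int s) j) * H ((y - j) + j))"
    by (simp add: sum_distrib_right)
  also have "\<dots> = (\<Sum>j\<in>{-M..M}. \<Sum>y\<in>Rng M i (Suc s). qf w M tau i s (y - j) * cl (w (y - j, tau - int s) j) * H ((y - j) + j))"
    by (rule sum.swap)
  also have "\<dots> = (\<Sum>j\<in>{-M..M}. \<Sum>x\<in>Rng M i s. qf w M tau i s x * cl (w (x, tau - int s) j) * H (x + j))"
  proof (rule sum.cong[OF refl])
    fix j assume j: "j \<in> {-M..M}"
    show "(\<Sum>y\<in>Rng M i (Suc s). qf w M tau i s (y - j) * cl (w (y - j, tau - int s) j) * H ((y - j) + j)) =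
          (\<Sum>x\<in>Rng M i s. qf w M tau i s x * cl (w (x, tau - int s) j) * H (x + j))"
      unfolding Rng_def[of M i "Suc s"]
      apply (rule sum_shift_supp[where G = "\<lambda>x. qf w M tau i s x * cl (w (x, tau - int s) j) * H (x + j)"])
      using qf_supp[OF M] j by (auto simp: Rng_def algebra_simps)
  qed
  finally show ?thesis .
qed

definition good :: "int \<Rightarrow> (int \<times> int \<Rightarrow> int \<Rightarrow> real) \<Rightarrow> bool" where
  "good M w \<longleftrightarrow> (\<forall>k. w k \<in> probvec M)"

lemma good_pv: "good M w \<Longrightarrow> w k \<in> probvec M"
  unfolding good_def by blast

lemma probvec_le1:
  assumes "u \<in> probvec M" shows "u j \<le> 1"
proof (cases "\<bar>j\<bar> \<le> M")
  case True
  have "u j \<le> (\<Sum>y\<in>{-M..M}. u y)"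
    using assms True by (intro member_le_sum) (auto simp: probvec_def)
  then show ?thesis using assms by (simp add: probvec_def)
next
  case False then show ?thesis using assms by (auto simp: probvec_def)
qed

lemma good_cl: "good M w \<Longrightarrow> cl (w k j) = w k j"
proof -
  assume g: "good M w"
  then have "w k \<in> probvec M" by (rule good_pv)
  then show ?thesis using probvec_le1[of "w k" M j] by (intro cl_id) (auto simp: probvec_def)
qed

lemma good_sum1: "good M w \<Longrightarrow> (\<Sum>j\<in>{-M..M}. w k j) = 1"
  using good_pv[of M w k] unfolding probvec_def by blast

lemma good_zero: "good M w \<Longrightarrow> M < \<bar>j\<bar> \<Longrightarrow> w k j = 0"
  using good_pv[of M w k] unfolding probvec_def by blast

lemma good_nonneg: "good M w \<Longrightarrow> 0 \<le> w k j"
  using good_pv[of M w k] unfolding probvec_def by blast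

lemma qf_sum1:
  assumes M: "M \<ge> 0" and g: "good M w"
  shows "(\<Sum>y\<in>Rng M i s. qf w M tau i s y) = 1"
proof (induction s)
  case 0 then show ?case by (simp add: Rng_def)
next
  case (Suc s)
  have "(\<Sum>y\<in>Rng M i (Suc s). qf w M tau i (Suc s) y) = (\<Sum>y\<in>Rng M i (Suc s). qf w M tau i (Suc s) y * 1)" by simp
  also have "\<dots> = (\<Sum>j\<in>{-M..M}. \<Sum>x\<in>Rng M i s. qf w M tau i s x * cl (w (x, tau - int s) j) * 1)"
    by (rule qf_rec_sum[OF M])
  also have "\<dots> = (\<Sum>x\<in>Rng M i s. qf w M tau i s x * (\<Sum>j\<in>{-M..M}. w (x, tau - int s) j))"
    by (subst sum.swap) (simp add: good_cl[OF g] sum_distrib_left)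
  also have "\<dots> = 1" using Suc by (simp add: good_sum1[OF g])
  finally show ?case .
qed

lemma qprob_qf:
  assumes M: "M \<ge> 0" and g: "good M w"
  shows "qprob w tau i s y = qf w M tau i s y"
proof (induction s arbitrary: y)
  case 0 then show ?case by simp
next
  case (Suc s)
  have "qprob w tau i (Suc s) y = (\<Sum>\<^sub>\<infinity>x. qf w M tau i s x * w (x, tau - int s) (y - x))"
    by (simp add: Suc.IH)
  also have "\<dots> = (\<Sum>x\<in>{y - M..y + M}. qf w M tau i s x * w (x, tau - int s) (y - x))"
  proof -
    have "(\<Sum>\<^sub>\<infinity>x. qf w M tau i s x * w (x, tau - int s) (y - x)) =
          (\<Sum>\<^sub>\<infinity>x\<in>{y - M..y + M}. qf w M tau i s x * w (x, tau - int s) (y - x))"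
      by (rule infsum_cong_neutral) (auto simp: good_zero[OF g])
    then show ?thesis by simp
  qed
  also have "\<dots> = (\<Sum>j\<in>{-M..M}. qf w M tau i s (y - j) * cl (w (y - j, tau - int s) j))"
    by (rule sum.reindex_bij_witness[of _ "\<lambda>j. y - j" "\<lambda>x. y - x"]) (auto simp: good_cl[OF g])
  finally show ?case by simp
qed


lemma indep_coord_prod:
  fixes \<mu> :: "'a measure" and f g :: "('i \<Rightarrow> 'a) \<Rightarrow> real"
  assumes prob: "prob_space \<mu>" and disj: "A \<inter> B = {}"
    and fm: "f \<in> borel_measurable (PiM UNIV (\<lambda>_. \<mu>))"
    and gm: "g \<in> borel_measurable (PiM UNIV (\<lambda>_. \<mu>))"
    and fdep: "\<And>w w'. (\<And>k. k \<in> A \<Longrightarrow> w k = w' k) \<Longrightarrow> f w = f w'"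
    and gdep: "\<And>w w'. (\<And>k. k \<in> B \<Longrightarrow> w k = w' k) \<Longrightarrow> g w = g w'"
    and fb: "\<And>w. \<bar>f w\<bar> \<le> cf" and gb: "\<And>w. \<bar>g w\<bar> \<le> cg"
  shows "(\<integral>w. f w * g w \<partial>PiM UNIV (\<lambda>_. \<mu>)) =
         (\<integral>w. f w \<partial>PiM UNIV (\<lambda>_. \<mu>)) * (\<integral>w. g w \<partial>PiM UNIV (\<lambda>_. \<mu>))"
proof -
  let ?P = "PiM (UNIV :: 'i set) (\<lambda>_. \<mu>)"
  have pP: "prob_space ?P" by (rule prob_space_PiM) (rule prob)
  interpret ps: prob_space ?P by (rule pP)
  have ind: "ps.indep_vars (\<lambda>_. \<mu>) (\<lambda>i w. w i) UNIV"
  proof (subst ps.indep_vars_iff_distr_eq_PiM)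
    show "UNIV \<noteq> {}" by simp
    show "(\<lambda>w. w i) \<in> measurable ?P \<mu>" for i using measurable_component_singleton[of i UNIV "\<lambda>_. \<mu>"] by simp
    have "(\<lambda>x. \<lambda>i\<in>UNIV. x i) = (\<lambda>x::'i \<Rightarrow> 'a. x)" by (auto simp: restrict_def)
    then have "distr ?P ?P (\<lambda>x. \<lambda>i\<in>UNIV. x i) = ?P" by (simp add: distr_id)
    also have "?P = (\<Pi>\<^sub>M i\<in>UNIV. distr ?P \<mu> (\<lambda>w. w i))"
      by (intro PiM_cong refl distr_PiM_component[symmetric] prob) simp
    finally show "distr ?P (\<Pi>\<^sub>M i\<in>UNIV. \<mu>) (\<lambda>x. \<lambda>i\<in>UNIV. x i) = (\<Pi>\<^sub>M i\<in>UNIV. distr ?P \<mu> (\<lambda>w. w i))" .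
  qed
  have iv: "ps.indep_var (PiM A (\<lambda>_. \<mu>)) (\<lambda>w. restrict (\<lambda>i. w i) A) (PiM B (\<lambda>_. \<mu>)) (\<lambda>w. restrict (\<lambda>i. w i) B)"
    by (rule ps.indep_var_restrict[OF ind disj]) auto
  obtain u0 where u0: "u0 \<in> space \<mu>" using prob_space.not_empty[OF prob] by blast
  define eA where "eA = (\<lambda>v::'i \<Rightarrow> 'a. \<lambda>k. if k \<in> A then v k else u0)"
  define eB where "eB = (\<lambda>v::'i \<Rightarrow> 'a. \<lambda>k. if k \<in> B then v k else u0)"
  have eAm: "eA \<in> measurable (PiM A (\<lambda>_. \<mu>)) ?P"
    unfolding eA_def
  proof (rule measurable_PiM_single')
    fix k :: 'i
    show "(\<lambda>\<omega>. if k \<in> A then \<omega> k else u0) \<in> measurable (PiM A (\<lambda>_. \<mu>)) \<mu>"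
      by (cases "k \<in> A") (auto intro: measurable_component_singleton simp: u0)
    show "(\<lambda>\<omega>. \<lambda>k. if k \<in> A then \<omega> k else u0) \<in> space (PiM A (\<lambda>_. \<mu>)) \<rightarrow> (\<Pi>\<^sub>E i\<in>UNIV. space \<mu>)"
      using u0 by (auto simp: space_PiM PiE_def Pi_def)
  qed
  have eBm: "eB \<in> measurable (PiM B (\<lambda>_. \<mu>)) ?P"
    unfolding eB_def
  proof (rule measurable_PiM_single')
    fix k :: 'i
    show "(\<lambda>\<omega>. if k \<in> B then \<omega> k else u0) \<in> measurable (PiM B (\<lambda>_. \<mu>)) \<mu>"
      by (cases "k \<in> B") (auto intro: measurable_component_singleton simp: u0)
    show "(\<lambda>\<omega>. \<lambda>k. if k \<in> B then \<omega> k else u0) \<in> space (PiM B (\<lambda>_. \<mu>)) \<rightarrow> (\<Pi>\<^sub>E i\<in>UNIV. space \<mu>)"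
      using u0 by (auto simp: space_PiM PiE_def Pi_def)
  qed
  have f1m: "(f \<circ> eA) \<in> borel_measurable (PiM A (\<lambda>_. \<mu>))" using measurable_comp[OF eAm fm] .
  have g1m: "(g \<circ> eB) \<in> borel_measurable (PiM B (\<lambda>_. \<mu>))" using measurable_comp[OF eBm gm] .
  have fe: "(f \<circ> eA) \<circ> (\<lambda>w. restrict (\<lambda>i. w i) A) = f"
    by (rule ext, simp, rule fdep) (simp add: eA_def)
  have ge: "(g \<circ> eB) \<circ> (\<lambda>w. restrict (\<lambda>i. w i) B) = g"
    by (rule ext, simp, rule gdep) (simp add: eB_def)
  have ivfg: "ps.indep_var borel f borel g"
    using ps.indep_var_compose[OF iv f1m g1m] unfolding fe ge .
  have fi: "integrable ?P f"
    by (rule ps.integrable_const_bound[where B = cf]) (use fb fm in auto)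
  have gi: "integrable ?P g"
    by (rule ps.integrable_const_bound[where B = cg]) (use gb gm in auto)
  show ?thesis by (rule ps.indep_var_lebesgue_integral[OF ivfg fi gi])
qed

lemma integral_coord:
  fixes \<mu> :: "'a measure" and h :: "'a \<Rightarrow> real"
  assumes prob: "prob_space \<mu>" and hm: "h \<in> borel_measurable \<mu>"
  shows "(\<integral>w. h (w k) \<partial>PiM UNIV (\<lambda>_. \<mu>)) = (\<integral>u. h u \<partial>\<mu>)"
proof -
  have "(\<integral>u. h u \<partial>\<mu>) = (\<integral>u. h u \<partial>distr (PiM UNIV (\<lambda>_. \<mu>)) \<mu> (\<lambda>w. w k))"
    by (subst distr_PiM_component) (use prob in auto)
  also have "\<dots> = (\<integral>w. h (w k) \<partial>PiM UNIV (\<lambda>_. \<mu>))"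
    by (rule integral_distr) (auto intro: measurable_component_singleton hm)
  finally show ?thesis by simp
qed

lemma AE_good:
  fixes \<mu> :: "(int \<Rightarrow> real) measure"
  assumes prob: "prob_space \<mu>" and supp: "AE u in \<mu>. u \<in> probvec M"
  shows "AE w in PiM (UNIV :: (int \<times> int) set) (\<lambda>_. \<mu>). good M w"
proof -
  have "AE w in PiM (UNIV :: (int \<times> int) set) (\<lambda>_. \<mu>). w k \<in> probvec M" for k
    by (rule AE_PiM_component) (use prob supp in auto)
  then have "AE w in PiM (UNIV :: (int \<times> int) set) (\<lambda>_. \<mu>). \<forall>k. w k \<in> probvec M"
    by (subst AE_all_countable) auto
  then show ?thesis by (simp add: good_def)
qed


lemma integrable_bdd:
  fixes f :: "'a \<Rightarrow> real"
  assumes "prob_space Q" "f \<in> borel_measurable Q" "\<And>x. \<bar>f x\<bar> \<le> c"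
  shows "integrable Q f"
  by (rule finite_measure.integrable_const_bound[where B = c])
     (use assms in \<open>auto intro: prob_space.finite_measure\<close>)

lemma meas_u:
  assumes sets: "sets \<mu> = sets (PiM (UNIV :: int set) (\<lambda>_. borel))"
  shows "(\<lambda>u::int \<Rightarrow> real. u j) \<in> borel_measurable \<mu>"
proof -
  have "(\<lambda>u. u j) \<in> borel_measurable (PiM (UNIV :: int set) (\<lambda>_. borel))" by simp
  then show ?thesis using measurable_cong_sets[OF sets refl, of borel] by metis
qed

locale envsetup =
  fixes M :: int and \<mu> :: "(int \<Rightarrow> real) measure"
  assumes M: "M \<ge> 1"
    and prob: "prob_space \<mu>"
    and sets: "sets \<mu> = sets (PiM (UNIV :: int set) (\<lambda>_. borel))"
    and supp: "AE u in \<mu>. u \<in> probvec M"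
begin

abbreviation "PP \<equiv> PiM (UNIV :: (int \<times> int) set) (\<lambda>_. \<mu>)"

lemma pPP: "prob_space PP" by (rule prob_space_PiM) (rule prob)

lemma M0: "M \<ge> 0" using M by simp

lemma clu_meas: "(\<lambda>u. cl (u j)) \<in> borel_measurable \<mu>"
  using measurable_compose[OF meas_u[OF sets] cl_meas] by simp

lemma envp_cl: "envp \<mu> j = (\<integral>u. cl (u j) \<partial>\<mu>)"
proof -
  have "AE u in \<mu>. cl (u j) = u j"
    using supp by eventually_elim (auto intro!: cl_id probvec_le1 simp: probvec_def)
  then show ?thesis unfolding envp_def by (intro integral_cong_AE) (auto intro: meas_u[OF sets] clu_meas)
qed

lemma envp_nonneg: "envp \<mu> j \<ge> 0"
  unfolding envp_cl by (rule Bochner_Integration.integral_nonneg) (auto intro: cl_bounds)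

lemma envp_sum1: "(\<Sum>j\<in>{-M..M}. envp \<mu> j) = 1"
proof -
  have "(\<Sum>j\<in>{-M..M}. envp \<mu> j) = (\<integral>u. (\<Sum>j\<in>{-M..M}. cl (u j)) \<partial>\<mu>)"
    unfolding envp_cl
    by (rule Bochner_Integration.integral_sum[symmetric])
       (rule integrable_bdd[OF prob clu_meas, where c = 1], use cl_bounds in auto)
  also have "\<dots> = (\<integral>u. 1 \<partial>\<mu>)"
  proof (rule integral_cong_AE)
    show "AE u in \<mu>. (\<Sum>j\<in>{-M..M}. cl (u j)) = 1"
      using supp
    proof eventually_elim
      case (elim u)
      then have "cl (u j) = u j" for j by (intro cl_id probvec_le1) (auto simp: probvec_def)
      then show ?case using elim by (simp add: probvec_def)
    qed
  qed (auto intro!: borel_measurable_sum clu_meas)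
  also have "\<dots> = 1" using prob_space.prob_space[OF prob] by simp
  finally show ?thesis .
qed

lemma envp_le1: "j \<in> {-M..M} \<Longrightarrow> envp \<mu> j \<le> 1"
  using member_le_sum[of j "{-M..M}" "envp \<mu>"] envp_nonneg envp_sum1 by auto

lemma absV: "\<bar>envV \<mu> M\<bar> \<le> M"
proof -
  have "\<bar>envV \<mu> M\<bar> \<le> (\<Sum>j\<in>{-M..M}. \<bar>of_int j * envp \<mu> j\<bar>)"
    unfolding envV_def by (rule sum_abs)
  also have "\<dots> \<le> (\<Sum>j\<in>{-M..M}. of_int M * envp \<mu> j)"
    by (rule sum_mono) (auto simp: abs_mult envp_nonneg intro!: mult_right_mono)
  also have "\<dots> = M" by (simp add: sum_distrib_left[symmetric] envp_sum1)
  finally show ?thesis .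
qed

definition Fq :: "(int \<times> int \<Rightarrow> int \<Rightarrow> real) \<Rightarrow> real \<Rightarrow> int \<Rightarrow> int \<Rightarrow> nat \<Rightarrow> real" where
  "Fq w l tau i s = (\<Sum>y\<in>Rng M i s. qf w M tau i s y * exp (l * of_int (y - i)))"

definition m0 :: "real \<Rightarrow> real" where
  "m0 l = (\<Sum>j\<in>{-M..M}. envp \<mu> j * exp (l * of_int j))"

lemma qf_meas': "(\<lambda>w. qf w M tau i s y) \<in> borel_measurable PP"
  by (rule qf_meas[OF sets])

lemma Fq_meas: "(\<lambda>w. Fq w l tau i s) \<in> borel_measurable PP"
  unfolding Fq_def by (intro borel_measurable_sum borel_measurable_times qf_meas') auto

lemma cl_coord_meas: "(\<lambda>w. cl (w k j)) \<in> borel_measurable PP"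
  using measurable_compose[OF meas_coord[OF sets] cl_meas] by simp

lemma integral_Fq: "(\<integral>w. Fq w l tau i s \<partial>PP) = m0 l ^ s"
proof (induction s)
  case 0
  have "Fq w l tau i 0 = 1" for w by (simp add: Fq_def Rng_def)
  then show ?case using prob_space.prob_space[OF pPP] by simp
next
  case (Suc s)
  define a where "a = (\<lambda>(x::int) w. qf w M tau i s x * exp (l * of_int (x - i)))"
  define b where "b = (\<lambda>(x::int) (j::int) w. cl (w (x, tau - int s) j) * exp (l * of_int j))"
  have am: "a x \<in> borel_measurable PP" for x unfolding a_def by (intro borel_measurable_times qf_meas') auto
  have bm: "b x j \<in> borel_measurable PP" for x j unfolding b_def by (intro borel_measurable_times cl_coord_meas) auto
  have ab: "\<bar>a x w\<bar> \<le> (2 * real_of_int M + 1) ^ s * exp (l * of_int (x - i))" for x w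
    unfolding a_def using qf_bound[OF M0, of w tau i s x] qf_nonneg[of w M tau i s x]
    by (auto simp: abs_mult intro!: mult_right_mono)
  have bb: "\<bar>b x j w\<bar> \<le> exp (l * of_int j)" for x j w
    unfolding b_def using cl_bounds[of "w (x, tau - int s) j"] by (auto simp: abs_mult)
  have Feq: "Fq w l tau i (Suc s) = (\<Sum>j\<in>{-M..M}. \<Sum>x\<in>Rng M i s. a x w * b x j w)" for w
    unfolding Fq_def
    apply (subst qf_rec_sum[OF M0])
    apply (rule sum.cong[OF refl])+
    apply (simp add: a_def b_def algebra_simps flip: exp_add)
    done
  have intab: "integrable PP (\<lambda>w. a x w * b x j w)" for x j
    by (rule integrable_bdd[OF pPP, where c = "(2 * real_of_int M + 1) ^ s * exp (l * of_int (x - i)) * exp (l * of_int j)"])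
       (use am bm ab bb M0 in \<open>auto simp: abs_mult intro!: mult_mono\<close>)
  have inta: "integrable PP (a x)" for x
    by (rule integrable_bdd[OF pPP, where c = "(2 * real_of_int M + 1) ^ s * exp (l * of_int (x - i))"]) (use am ab in auto)
  have ib: "(\<integral>w. b x j w \<partial>PP) = envp \<mu> j * exp (l * of_int j)" for x j
  proof -
    have "(\<integral>w. b x j w \<partial>PP) = (\<integral>w. cl (w (x, tau - int s) j) \<partial>PP) * exp (l * of_int j)"
      unfolding b_def by simp
    also have "(\<integral>w. cl (w (x, tau - int s) j) \<partial>PP) = (\<integral>u. cl (u j) \<partial>\<mu>)"
      by (rule integral_coord[OF prob, where h = "\<lambda>u. cl (u j)"]) (rule clu_meas)
    finally show ?thesis by (simp add: envp_cl)
  qed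
  have iab: "(\<integral>w. a x w * b x j w \<partial>PP) = (\<integral>w. a x w \<partial>PP) * (envp \<mu> j * exp (l * of_int j))" for x j
  proof -
    have "(\<integral>w. a x w * b x j w \<partial>PP) = (\<integral>w. a x w \<partial>PP) * (\<integral>w. b x j w \<partial>PP)"
    proof (rule indep_coord_prod[OF prob, where A = "{k. tau - int s < snd k \<and> snd k \<le> tau}" and B = "{(x, tau - int s)}"])
      show "{k. tau - int s < snd k \<and> snd k \<le> tau} \<inter> {(x, tau - int s)} = {}" by auto
      show "a x \<in> borel_measurable PP" by (rule am)
      show "b x j \<in> borel_measurable PP" by (rule bm)
      show "a x w = a x w'" if "\<And>k. k \<in> {k. tau - int s < snd k \<and> snd k \<le> tau} \<Longrightarrow> w k = w' k" for w w'
        unfolding a_def using that by (subst qf_dep[of tau s w w']) auto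
      show "b x j w = b x j w'" if "\<And>k. k \<in> {(x, tau - int s)} \<Longrightarrow> w k = w' k" for w w'
        unfolding b_def using that by auto
      show "\<bar>a x w\<bar> \<le> (2 * real_of_int M + 1) ^ s * exp (l * of_int (x - i))" for w by (rule ab)
      show "\<bar>b x j w\<bar> \<le> exp (l * of_int j)" for w by (rule bb)
    qed
    then show ?thesis by (simp add: ib)
  qed
  have "(\<integral>w. Fq w l tau i (Suc s) \<partial>PP) = (\<Sum>j\<in>{-M..M}. \<Sum>x\<in>Rng M i s. (\<integral>w. a x w \<partial>PP) * (envp \<mu> j * exp (l * of_int j)))"
    unfolding Feq
    apply (subst Bochner_Integration.integral_sum)
     apply (rule Bochner_Integration.integrable_sum, rule intab)
    apply (rule sum.cong[OF refl])
    apply (subst Bochner_Integration.integral_sum)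
     apply (rule intab)
    apply (simp add: iab)
    done
  also have "\<dots> = m0 l * (\<Sum>x\<in>Rng M i s. (\<integral>w. a x w \<partial>PP))"
    unfolding m0_def by (simp add: sum_distrib_left sum_distrib_right mult.commute)
  also have "(\<Sum>x\<in>Rng M i s. (\<integral>w. a x w \<partial>PP)) = (\<integral>w. Fq w l tau i s \<partial>PP)"
  proof -
    have "(\<integral>w. Fq w l tau i s \<partial>PP) = (\<integral>w. (\<Sum>x\<in>Rng M i s. a x w) \<partial>PP)"
      unfolding Fq_def a_def by simp
    also have "\<dots> = (\<Sum>x\<in>Rng M i s. (\<integral>w. a x w \<partial>PP))"
      by (rule Bochner_Integration.integral_sum) (rule inta)
    finally show ?thesis by simp
  qed
  finally show ?case using Suc by simp
qed

end

context envsetup begin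

abbreviation "VV \<equiv> envV \<mu> M"

definition KK :: real where "KK = 4 * (real_of_int M)^2 * exp (2 * real_of_int M)"

lemma exp_quad: fixes z a :: real assumes "\<bar>z\<bar> \<le> a" shows "exp z \<le> 1 + z + exp a * z^2"
proof -
  obtain t where t: "\<bar>t\<bar> \<le> \<bar>z\<bar>" "exp z = (\<Sum>m<2. z ^ m / fact m) + exp t / fact 2 * z ^ 2"
    using Maclaurin_exp_le[of z 2] by blast
  have "(\<Sum>m<2. z ^ m / fact m) = 1 + z" by (simp add: lessThan_nat_numeral)
  then have "exp z = 1 + z + exp t / 2 * z^2" using t(2) by simp
  also have "exp t / 2 * z^2 \<le> exp a * z^2"
  proof -
    have "exp t \<le> exp a" using t(1) assms by simp
    then have "exp t / 2 \<le> exp a" using exp_gt_zero[of t] by linarith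
    then show ?thesis by (intro mult_right_mono) auto
  qed
  finally show ?thesis by simp
qed

lemma mgf_bound:
  assumes l: "\<bar>l\<bar> \<le> 1"
  shows "exp (- l * VV) * m0 l \<le> 1 + KK * l^2"
proof -
  have "exp (- l * VV) * m0 l = (\<Sum>j\<in>{-M..M}. envp \<mu> j * exp (l * (of_int j - VV)))"
    unfolding m0_def sum_distrib_left
    by (rule sum.cong[OF refl]) (simp add: algebra_simps flip: exp_add)
  also have "\<dots> \<le> (\<Sum>j\<in>{-M..M}. envp \<mu> j * (1 + l * (of_int j - VV) + KK * l^2))"
  proof (rule sum_mono, rule mult_left_mono[OF _ envp_nonneg])
    fix j assume j: "j \<in> {-M..M}"
    have jv: "\<bar>of_int j - VV\<bar> \<le> 2 * real_of_int M" using absV j by auto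
    have z: "\<bar>l * (of_int j - VV)\<bar> \<le> 2 * real_of_int M"
    proof -
      have "\<bar>l * (of_int j - VV)\<bar> = \<bar>l\<bar> * \<bar>of_int j - VV\<bar>" by (simp add: abs_mult)
      also have "\<dots> \<le> 1 * (2 * real_of_int M)" by (intro mult_mono l) (use jv in auto)
      finally show ?thesis by simp
    qed
    have "exp (l * (of_int j - VV)) \<le> 1 + l * (of_int j - VV) + exp (2 * real_of_int M) * (l * (of_int j - VV))^2"
      by (rule exp_quad[OF z])
    also have "exp (2 * real_of_int M) * (l * (of_int j - VV))^2 \<le> KK * l^2"
    proof -
      have "\<bar>of_int j - VV\<bar>^2 \<le> (2 * real_of_int M)^2"
        by (rule power_mono) (use jv in auto)
      then have jj: "(of_int j - VV)^2 \<le> (2 * real_of_int M)^2" by simp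
      have "exp (2 * real_of_int M) * (l * (of_int j - VV))^2 = exp (2 * real_of_int M) * (l^2 * (of_int j - VV)^2)"
        by (simp only: power_mult_distrib)
      also have "\<dots> \<le> exp (2 * real_of_int M) * (l^2 * (2 * real_of_int M)^2)"
        by (intro mult_left_mono jj) auto
      also have "\<dots> = KK * l^2"
        by (simp add: KK_def power2_eq_square mult_ac)
      finally show ?thesis .
    qed
    finally show "exp (l * (of_int j - VV)) \<le> 1 + l * (of_int j - VV) + KK * l^2" by simp
  qed
  also have "\<dots> = (\<Sum>j\<in>{-M..M}. envp \<mu> j * (1 - l * VV + KK * l^2) + l * (of_int j * envp \<mu> j))"
    by (rule sum.cong[OF refl]) (simp add: algebra_simps)
  also have "\<dots> = (\<Sum>j\<in>{-M..M}. envp \<mu> j) * (1 - l * VV + KK * l^2) + l * (\<Sum>j\<in>{-M..M}. of_int j * envp \<mu> j)"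
    by (simp only: sum.distrib sum_distrib_left sum_distrib_right)
  also have "\<dots> = 1 + KK * l^2" by (simp add: envp_sum1 envV_def[symmetric] algebra_simps)
  finally show ?thesis .
qed

lemma KK_nonneg: "KK \<ge> 0" unfolding KK_def by simp

definition Phi :: "(int \<times> int \<Rightarrow> int \<Rightarrow> real) \<Rightarrow> real \<Rightarrow> int \<Rightarrow> int \<Rightarrow> nat \<Rightarrow> real" where
  "Phi w l tau i s = (\<Sum>y\<in>Rng M i s. qf w M tau i s y *
      (exp (l * (of_int y - (of_int i + real s * VV))) + exp (- l * (of_int y - (of_int i + real s * VV)))))"

lemma Phi_Fq: "Phi w l tau i s = exp (- l * real s * VV) * Fq w l tau i s + exp (l * real s * VV) * Fq w (-l) tau i s"
  unfolding Phi_def Fq_def sum_distrib_left sum.distrib[symmetric]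
  by (rule sum.cong[OF refl]) (simp add: algebra_simps flip: exp_add)

lemma Phi_meas: "(\<lambda>w. Phi w l tau i s) \<in> borel_measurable PP"
  unfolding Phi_Fq by (intro borel_measurable_add borel_measurable_times Fq_meas) auto

lemma Phi_nonneg: "Phi w l tau i s \<ge> 0"
  unfolding Phi_def by (intro sum_nonneg mult_nonneg_nonneg qf_nonneg) auto

lemma Fq_integrable: "integrable PP (\<lambda>w. Fq w l tau i s)"
proof -
  have "\<bar>Fq w l tau i s\<bar> \<le> (\<Sum>y\<in>Rng M i s. (2 * real_of_int M + 1) ^ s * exp (l * of_int (y - i)))" for w
    unfolding Fq_def
    by (rule order_trans[OF sum_abs], rule sum_mono)
       (use qf_bound[OF M0] qf_nonneg in \<open>auto simp: abs_mult intro!: mult_right_mono\<close>)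
  then show ?thesis by (intro integrable_bdd[OF pPP Fq_meas])
qed

lemma integral_Phi:
  assumes l: "\<bar>l\<bar> \<le> 1"
  shows "(\<integral>w. Phi w l tau i s \<partial>PP) \<le> 2 * exp (KK * l^2 * real s)"
proof -
  have "(\<integral>w. Phi w l tau i s \<partial>PP) = exp (- l * real s * VV) * m0 l ^ s + exp (l * real s * VV) * m0 (-l) ^ s"
    unfolding Phi_Fq
    by (subst Bochner_Integration.integral_add) (auto intro!: Fq_integrable simp: integral_Fq)
  also have "\<dots> = (exp (- l * VV) * m0 l) ^ s + (exp (- (-l) * VV) * m0 (-l)) ^ s"
    by (simp add: power_mult_distrib flip: exp_of_nat_mult) (simp add: algebra_simps)
  also have "\<dots> \<le> (1 + KK * l^2) ^ s + (1 + KK * (-l)^2) ^ s"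
  proof (intro add_mono power_mono mgf_bound)
    show "0 \<le> exp (- l * VV) * m0 l" "0 \<le> exp (- (-l) * VV) * m0 (-l)"
      unfolding m0_def by (auto intro!: sum_nonneg mult_nonneg_nonneg envp_nonneg)
  qed (use l in auto)
  also have "\<dots> = 2 * (1 + KK * l^2) ^ s" by simp
  also have "\<dots> \<le> 2 * exp (KK * l^2) ^ s"
  proof -
    have a: "1 + KK * l^2 \<le> exp (KK * l^2)" by (rule exp_ge_add_one_self)
    have b: "0 \<le> 1 + KK * l^2" using KK_nonneg by (intro add_nonneg_nonneg mult_nonneg_nonneg) auto
    show ?thesis by (intro mult_left_mono power_mono a b) simp
  qed
  also have "\<dots> = 2 * exp (KK * l^2 * real s)" by (simp flip: exp_of_nat_mult add: algebra_simps)
  finally show ?thesis .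
qed

end

context envsetup begin

definition Nn :: "real \<Rightarrow> nat \<Rightarrow> nat" where "Nn T n = nat \<lfloor>real n * T\<rfloor>"
definition Rn :: "real \<Rightarrow> real \<Rightarrow> real \<Rightarrow> nat \<Rightarrow> int" where
  "Rn ybar S T n = \<lceil>\<bar>real n * ybar\<bar> + S * sqrt (real n) + real n * T * \<bar>VV\<bar> + 3\<rceil>"
definition lam :: "nat \<Rightarrow> real" where "lam n = 1 / sqrt (real n)"

definition BadE :: "real \<Rightarrow> real \<Rightarrow> real \<Rightarrow> nat \<Rightarrow> (int \<times> int \<Rightarrow> int \<Rightarrow> real) set" where
  "BadE ybar S T n = (if n = 0 then {} else
     (\<Union>s\<in>{..Nn T n}. \<Union>i\<in>{- Rn ybar S T n .. Rn ybar S T n}.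
        {w \<in> space PP. real n ^ 4 \<le> Phi w (lam n) (int s) i s}))"

lemma BadE_sets: "BadE ybar S T n \<in> sets PP"
  unfolding BadE_def using Phi_meas by auto

lemma Phi_integrable: "integrable PP (\<lambda>w. Phi w l tau i s)"
  unfolding Phi_Fq by (intro Bochner_Integration.integrable_add integrable_mult_right Fq_integrable)

lemma measure_one_bad:
  assumes n: "n \<ge> 1" and s: "s \<le> Nn T n" and T: "T \<ge> 0"
  shows "measure PP {w \<in> space PP. real n ^ 4 \<le> Phi w (lam n) tau i s} \<le> 2 * exp (KK * T) / real n ^ 4"
proof -
  have "measure PP {w \<in> space PP. real n ^ 4 \<le> Phi w (lam n) tau i s} \<le> (\<integral>w. Phi w (lam n) tau i s \<partial>PP) / real n ^ 4"
    by (rule integral_Markov_inequality_measure[OF Phi_integrable, where A = "space PP"])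
       (use n in \<open>auto simp: Phi_nonneg\<close>)
  also have "\<dots> \<le> 2 * exp (KK * (lam n)^2 * real s) / real n ^ 4"
  proof (rule divide_right_mono[OF integral_Phi])
    show "\<bar>lam n\<bar> \<le> 1" using n by (simp add: lam_def)
  qed simp
  also have "\<dots> \<le> 2 * exp (KK * T) / real n ^ 4"
  proof -
    have "real s \<le> real n * T" using s T unfolding Nn_def
    proof -
      have f0: "0 \<le> \<lfloor>real n * T\<rfloor>" using T by simp
      have "int s \<le> \<lfloor>real n * T\<rfloor>" using s f0 unfolding Nn_def by (simp add: le_nat_iff)
      then have "real_of_int (int s) \<le> real_of_int \<lfloor>real n * T\<rfloor>" by linarith
      then show ?thesis by linarith
    qed
    then have "real s / real n \<le> T" using n by (simp add: divide_le_eq mult.commute)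
    moreover have "(lam n)^2 = 1 / real n" using n by (simp add: lam_def power_divide)
    ultimately have "KK * (lam n)^2 * real s \<le> KK * T"
    proof -
      assume a: "real s / real n \<le> T" and b: "(lam n)^2 = 1 / real n"
      have "KK * (lam n)^2 * real s = KK * (real s / real n)" by (simp add: b)
      also have "\<dots> \<le> KK * T" by (rule mult_left_mono[OF a KK_nonneg])
      finally show ?thesis .
    qed
    then show ?thesis by (intro divide_right_mono mult_left_mono) auto
  qed
  finally show ?thesis .
qed

lemma Rn_pos: "S \<ge> 0 \<Longrightarrow> T \<ge> 0 \<Longrightarrow> Rn ybar S T n \<ge> 0"
proof -
  assume S: "S \<ge> 0" and T: "T \<ge> 0"
  have "0 \<le> \<bar>real n * ybar\<bar> + S * sqrt (real n) + real n * T * \<bar>VV\<bar> + 3"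
    using S T by (intro add_nonneg_nonneg mult_nonneg_nonneg) auto
  then show ?thesis unfolding Rn_def by (metis ceiling_mono ceiling_zero)
qed

lemma one_sets: "{w \<in> space PP. c \<le> Phi w l tau i s} \<in> sets PP"
  using Phi_meas[of l tau i s] by measurable

lemma measure_BadE:
  assumes n: "n \<ge> 1" and S: "S \<ge> 0" and T: "T \<ge> 0"
  shows "measure PP (BadE ybar S T n) \<le> real (Nn T n + 1) * (2 * of_int (Rn ybar S T n) + 1) * (2 * exp (KK * T) / real n ^ 4)"
proof -
  let ?c = "2 * exp (KK * T) / real n ^ 4"
  let ?I = "{- Rn ybar S T n .. Rn ybar S T n}"
  have "measure PP (BadE ybar S T n) \<le> (\<Sum>s\<in>{..Nn T n}. measure PP (\<Union>i\<in>?I. {w \<in> space PP. real n ^ 4 \<le> Phi w (lam n) (int s) i s}))"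
    unfolding BadE_def using n by (auto intro!: measure_UNION_le sets.finite_UN one_sets)
  also have "\<dots> \<le> (\<Sum>s\<in>{..Nn T n}. \<Sum>i\<in>?I. measure PP {w \<in> space PP. real n ^ 4 \<le> Phi w (lam n) (int s) i s})"
    by (intro sum_mono measure_UNION_le) (auto intro!: one_sets)
  also have "\<dots> \<le> (\<Sum>s\<in>{..Nn T n}. \<Sum>i\<in>?I. ?c)"
    by (intro sum_mono measure_one_bad n T) auto
  also have "\<dots> = real (Nn T n + 1) * (2 * of_int (Rn ybar S T n) + 1) * ?c"
  proof -
    have "card ?I = nat (2 * Rn ybar S T n + 1)" by simp
    moreover have "real (nat (2 * Rn ybar S T n + 1)) = 2 * of_int (Rn ybar S T n) + 1"
      using Rn_pos[OF S T, of ybar n] by simp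
    ultimately show ?thesis by simp
  qed
  finally show ?thesis .
qed

definition Acnt :: "real \<Rightarrow> real \<Rightarrow> real \<Rightarrow> real" where
  "Acnt ybar S T = (T + 1) * (2 * \<bar>ybar\<bar> + 2 * S + 2 * T * \<bar>VV\<bar> + 9)"

lemma count_bound:
  assumes n: "n \<ge> 1" and S: "S \<ge> 0" and T: "T \<ge> 0"
  shows "real (Nn T n + 1) * (2 * of_int (Rn ybar S T n) + 1) \<le> Acnt ybar S T * real n ^ 2"
proof -
  have n1: "real n \<ge> 1" using n by simp
  have a: "real (Nn T n + 1) \<le> real n * (T + 1)"
  proof -
    have "real (Nn T n) \<le> real n * T"
    proof -
      have f0: "0 \<le> \<lfloor>real n * T\<rfloor>" using T by simp
      have "real (Nn T n) = real_of_int \<lfloor>real n * T\<rfloor>" unfolding Nn_def using f0 by simp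
      also have "\<dots> \<le> real n * T" by simp
      finally show ?thesis .
    qed
    then show ?thesis using n1 by (simp add: algebra_simps)
  qed
  have sq: "sqrt (real n) \<le> real n"
  proof -
    have "sqrt (real n) * 1 \<le> sqrt (real n) * sqrt (real n)" by (intro mult_left_mono) (use n1 in auto)
    then show ?thesis by simp
  qed
  have b: "2 * of_int (Rn ybar S T n) + 1 \<le> real n * (2 * \<bar>ybar\<bar> + 2 * S + 2 * T * \<bar>VV\<bar> + 9)"
  proof -
    have "of_int (Rn ybar S T n) \<le> \<bar>real n * ybar\<bar> + S * sqrt (real n) + real n * T * \<bar>VV\<bar> + 4"
      unfolding Rn_def by linarith
    moreover have "S * sqrt (real n) \<le> S * real n" by (rule mult_left_mono[OF sq S])
    moreover have "\<bar>real n * ybar\<bar> = real n * \<bar>ybar\<bar>" by (simp add: abs_mult)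
    ultimately show ?thesis using n1 by (simp add: algebra_simps)
  qed
  have "real (Nn T n + 1) * (2 * of_int (Rn ybar S T n) + 1) \<le> (real n * (T + 1)) * (real n * (2 * \<bar>ybar\<bar> + 2 * S + 2 * T * \<bar>VV\<bar> + 9))"
    by (rule mult_mono[OF a b]) (use n1 S T Rn_pos[OF S T, of ybar n] in auto)
  then show ?thesis by (simp add: Acnt_def power2_eq_square algebra_simps)
qed

lemma Acnt_nonneg: "S \<ge> 0 \<Longrightarrow> T \<ge> 0 \<Longrightarrow> Acnt ybar S T \<ge> 0"
  unfolding Acnt_def by (intro mult_nonneg_nonneg add_nonneg_nonneg) auto

lemma AE_eventually_notbad:
  assumes S: "S \<ge> 0" and T: "T \<ge> 0"
  shows "AE w in PP. eventually (\<lambda>n. w \<in> space PP - BadE ybar S T n) sequentially"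
proof (rule borel_cantelli_AE1)
  show "BadE ybar S T n \<in> sets PP" for n by (rule BadE_sets)
  show "emeasure PP (BadE ybar S T n) < \<infinity>" for n
    using prob_space.emeasure_le_1[OF pPP, of "BadE ybar S T n"] by (simp add: le_less_trans)
  let ?C = "Acnt ybar S T * (2 * exp (KK * T))"
  show "summable (\<lambda>n. measure PP (BadE ybar S T n))"
  proof (rule summable_comparison_test')
    show "summable (\<lambda>n. ?C * inverse (real n ^ 2))"
      by (intro summable_mult inverse_power_summable) simp
    fix n :: nat assume n: "n \<ge> 1"
    have "measure PP (BadE ybar S T n) \<le> real (Nn T n + 1) * (2 * of_int (Rn ybar S T n) + 1) * (2 * exp (KK * T) / real n ^ 4)"
      by (rule measure_BadE[OF n S T])
    also have "\<dots> \<le> (Acnt ybar S T * real n ^ 2) * (2 * exp (KK * T) / real n ^ 4)"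
      by (intro mult_right_mono count_bound[OF n S T]) auto
    also have "\<dots> = ?C * inverse (real n ^ 2)"
      using n by (simp add: field_simps power2_eq_square eval_nat_numeral)
    finally show "norm (measure PP (BadE ybar S T n)) \<le> ?C * inverse (real n ^ 2)" by simp
  qed
qed

end

definition Acoef :: "(int \<Rightarrow> real) \<Rightarrow> int set \<Rightarrow> int \<Rightarrow> int \<Rightarrow> real" where
  "Acoef q R x i = (if x < i then (\<Sum>y\<in>R \<inter> {i..}. q y) else 0) - (if i \<le> x then (\<Sum>y\<in>R \<inter> {..<i}. q y) else 0)"

lemma count_between:
  fixes x y K :: int
  assumes "\<bar>y - x\<bar> \<le> K"
  shows "(\<Sum>i\<in>{x - K..x + K}. ((if x < i \<and> i \<le> y then 1 else 0) - (if y < i \<and> i \<le> x then 1 else 0)) :: real) = of_int (y - x)"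
proof -
  have e1: "(\<Sum>i\<in>{x - K..x + K}. (if x < i \<and> i \<le> y then 1 else 0) :: real) = real (card {x<..y})"
  proof -
    have "(\<Sum>i\<in>{x - K..x + K}. (if x < i \<and> i \<le> y then 1 else 0) :: real) = (\<Sum>i\<in>{i\<in>{x - K..x + K}. x < i \<and> i \<le> y}. 1)"
      by (rule sum.inter_filter[symmetric]) simp
    also have "{i\<in>{x - K..x + K}. x < i \<and> i \<le> y} = {x<..y}" using assms by auto
    finally show ?thesis by simp
  qed
  have e2: "(\<Sum>i\<in>{x - K..x + K}. (if y < i \<and> i \<le> x then 1 else 0) :: real) = real (card {y<..x})"
  proof -
    have "(\<Sum>i\<in>{x - K..x + K}. (if y < i \<and> i \<le> x then 1 else 0) :: real) = (\<Sum>i\<in>{i\<in>{x - K..x + K}. y < i \<and> i \<le> x}. 1)"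
      by (rule sum.inter_filter[symmetric]) simp
    also have "{i\<in>{x - K..x + K}. y < i \<and> i \<le> x} = {y<..x}" using assms by auto
    finally show ?thesis by simp
  qed
  show ?thesis unfolding sum_subtractf e1 e2 by simp
qed

lemma Acoef_sum:
  fixes q :: "int \<Rightarrow> real"
  assumes R: "R \<subseteq> {x - K..x + K}"
  shows "(\<Sum>i\<in>{x - K..x + K}. Acoef q R x i) = (\<Sum>y\<in>R. of_int (y - x) * q y)"
proof -
  have fR: "finite R" using R finite_subset by blast
  have "Acoef q R x i = (\<Sum>y\<in>R. q y * ((if x < i \<and> i \<le> y then 1 else 0) - (if y < i \<and> i \<le> x then 1 else 0)))" for i
  proof (cases "x < i")
    case True
    then have "Acoef q R x i = (\<Sum>y\<in>R \<inter> {i..}. q y)" by (simp add: Acoef_def)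
    also have "\<dots> = (\<Sum>y\<in>R. if y \<in> {i..} then q y else 0)" by (rule sum.inter_restrict[OF fR])
    also have "\<dots> = (\<Sum>y\<in>R. q y * ((if x < i \<and> i \<le> y then 1 else 0) - (if y < i \<and> i \<le> x then 1 else 0)))"
      using True by (intro sum.cong) auto
    finally show ?thesis .
  next
    case False
    then have "Acoef q R x i = - (\<Sum>y\<in>R \<inter> {..<i}. q y)" by (simp add: Acoef_def)
    also have "\<dots> = - (\<Sum>y\<in>R. if y \<in> {..<i} then q y else 0)" by (simp add: sum.inter_restrict[OF fR])
    also have "\<dots> = (\<Sum>y\<in>R. q y * ((if x < i \<and> i \<le> y then 1 else 0) - (if y < i \<and> i \<le> x then 1 else 0)))"
      using False by (simp add: sum_negf[symmetric]) (intro sum.cong, auto)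
    finally show ?thesis .
  qed
  then have "(\<Sum>i\<in>{x - K..x + K}. Acoef q R x i) =
     (\<Sum>y\<in>R. q y * (\<Sum>i\<in>{x - K..x + K}. ((if x < i \<and> i \<le> y then 1 else 0) - (if y < i \<and> i \<le> x then 1 else 0))))"
    by (simp add: sum_distrib_left) (rule sum.swap)
  also have "\<dots> = (\<Sum>y\<in>R. q y * of_int (y - x))"
  proof (rule sum.cong[OF refl])
    fix y assume "y \<in> R"
    then have "y \<in> {x - K..x + K}" using R by blast
    then have "\<bar>y - x\<bar> \<le> K" by auto
    then show "q y * (\<Sum>i\<in>{x - K..x + K}. ((if x < i \<and> i \<le> y then 1 else 0) - (if y < i \<and> i \<le> x then 1 else 0))) = q y * of_int (y - x)"
      by (simp only: count_between)
  qed
  finally show ?thesis by (simp add: mult.commute)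
qed

lemma Acoef_zero:
  assumes R: "R \<subseteq> {x - K..x + K}" and i: "i \<notin> {x - K..x + K}"
  shows "Acoef q R x i = 0"
proof (cases "x < i")
  case True
  then have "R \<inter> {i..} = {}" using R i by auto
  then show ?thesis using True by (simp add: Acoef_def)
next
  case False
  then have "R \<inter> {..<i} = {}" using R i by auto
  then show ?thesis using False by (simp add: Acoef_def)
qed


lemma term_bound:
  fixes q l L z :: real
  assumes q: "q \<ge> 0" and h: "l * L \<le> l * z \<or> l * L \<le> - (l * z)"
  shows "q \<le> q * (exp (l * z) + exp (- l * z)) * exp (- l * L)"
proof -
  have "exp (l * L) \<le> exp (l * z) + exp (- l * z)"
    using h by (smt (verit) exp_gt_zero exp_le_cancel_iff mult_minus_left)
  then have "exp (l * L) * exp (- l * L) \<le> (exp (l * z) + exp (- l * z)) * exp (- l * L)"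
    by (intro mult_right_mono) auto
  then have "1 \<le> (exp (l * z) + exp (- l * z)) * exp (- l * L)"
    by (simp add: exp_add[symmetric])
  then have "q * 1 \<le> q * ((exp (l * z) + exp (- l * z)) * exp (- l * L))"
    by (intro mult_left_mono q)
  then show ?thesis by (simp add: mult.assoc)
qed

lemma Acoef_le1:
  assumes fR: "finite R" and q: "\<And>y. q y \<ge> 0" and s1: "(\<Sum>y\<in>R. q y) = 1"
  shows "\<bar>Acoef q R x i\<bar> \<le> 1"
proof -
  have "(\<Sum>y\<in>R \<inter> A. q y) \<le> 1" for A
    using sum_mono2[OF fR, of "R \<inter> A" q] q s1 by auto
  moreover have "(\<Sum>y\<in>R \<inter> A. q y) \<ge> 0" for A by (intro sum_nonneg q)
  ultimately show ?thesis unfolding Acoef_def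
    by (cases "x < i") (auto simp: abs_le_iff intro: order_trans[of _ 0])
qed

lemma Acoef_far:
  fixes c l L D :: real
  assumes fR: "finite R" and q: "\<And>y. q y \<ge> 0" and l: "l > 0"
    and cx: "\<bar>c - of_int x\<bar> \<le> D" and DL: "D \<le> L" and far: "\<bar>of_int i - c\<bar> > L"
  shows "\<bar>Acoef q R x i\<bar> \<le> (\<Sum>y\<in>R. q y * (exp (l * (of_int y - c)) + exp (- l * (of_int y - c)))) * exp (- l * L)"
proof -
  let ?Phi = "\<Sum>y\<in>R. q y * (exp (l * (of_int y - c)) + exp (- l * (of_int y - c)))"
  have sub: "(\<Sum>y\<in>R \<inter> A. q y) \<le> ?Phi * exp (- l * L)"
    if hA: "\<And>y. y \<in> A \<Longrightarrow> l * L \<le> l * (of_int y - c) \<or> l * L \<le> - (l * (of_int y - c))" for A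
  proof -
    have "(\<Sum>y\<in>R \<inter> A. q y) \<le> (\<Sum>y\<in>R \<inter> A. q y * (exp (l * (of_int y - c)) + exp (- l * (of_int y - c))) * exp (- l * L))"
      by (intro sum_mono term_bound q hA) auto
    also have "\<dots> \<le> (\<Sum>y\<in>R. q y * (exp (l * (of_int y - c)) + exp (- l * (of_int y - c))) * exp (- l * L))"
      by (intro sum_mono2 fR) (auto intro!: mult_nonneg_nonneg q add_nonneg_nonneg)
    also have "\<dots> = ?Phi * exp (- l * L)" by (simp add: sum_distrib_right)
    finally show ?thesis .
  qed
  have nn: "(\<Sum>y\<in>R \<inter> A. q y) \<ge> 0" for A by (intro sum_nonneg q)
  show ?thesis
  proof (cases "x < i")
    case True
    have ic: "of_int i - c > L"
    proof (rule ccontr)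
      assume "\<not> of_int i - c > L"
      then have "of_int i - c < - L" using far by auto
      then have "real_of_int i < real_of_int x" using cx DL by (auto simp: abs_le_iff)
      then show False using True by simp
    qed
    have "(\<Sum>y\<in>R \<inter> {i..}. q y) \<le> ?Phi * exp (- l * L)"
    proof (rule sub)
      fix y assume "y \<in> {i..}"
      then have "L \<le> of_int y - c" using ic by auto
      then show "l * L \<le> l * (of_int y - c) \<or> l * L \<le> - (l * (of_int y - c))"
        using l by (simp add: mult_left_mono)
    qed
    then show ?thesis using True nn[of "{i..}"] by (simp add: Acoef_def)
  next
    case False
    have ic: "c - of_int i > L"
    proof (rule ccontr)
      assume "\<not> c - of_int i > L"
      then have "of_int i - c > L" using far by auto
      then have "real_of_int i > real_of_int x" using cx DL by (auto simp: abs_le_iff)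
      then show False using False by simp
    qed
    have "(\<Sum>y\<in>R \<inter> {..<i}. q y) \<le> ?Phi * exp (- l * L)"
    proof (rule sub)
      fix y assume "y \<in> {..<i}"
      then have "L \<le> - (of_int y - c)" using ic by auto
      then show "l * L \<le> l * (of_int y - c) \<or> l * L \<le> - (l * (of_int y - c))"
      proof -
        have "l * L \<le> l * (- (of_int y - c))" using l \<open>L \<le> - (of_int y - c)\<close> by (intro mult_left_mono) auto
        then show ?thesis by (intro disjI2) (simp add: right_diff_distrib)
      qed
    qed
    then show ?thesis using False nn[of "{..<i}"] by (simp add: Acoef_def)
  qed
qed

lemma card_near:
  fixes c L :: real
  assumes "L \<ge> 0"
  shows "real (card {i \<in> I. \<bar>of_int i - c\<bar> \<le> L}) \<le> 2 * L + 1"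
proof -
  have sub: "{i \<in> I. \<bar>of_int i - c\<bar> \<le> L} \<subseteq> {\<lceil>c - L\<rceil>..\<lfloor>c + L\<rfloor>}"
    by (auto simp: abs_le_iff ceiling_le_iff le_floor_iff)
  have "card {i \<in> I. \<bar>of_int i - c\<bar> \<le> L} \<le> card {\<lceil>c - L\<rceil>..\<lfloor>c + L\<rfloor>}"
    by (rule card_mono[OF _ sub]) simp
  also have "\<dots> = nat (\<lfloor>c + L\<rfloor> + 1 - \<lceil>c - L\<rceil>)" by simp
  finally have "real (card {i \<in> I. \<bar>of_int i - c\<bar> \<le> L}) \<le> real (nat (\<lfloor>c + L\<rfloor> + 1 - \<lceil>c - L\<rceil>))"
    by (rule of_nat_mono)
  also have "\<dots> \<le> 2 * L + 1"
  proof -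
    have "real_of_int (\<lfloor>c + L\<rfloor> + 1 - \<lceil>c - L\<rceil>) \<le> 2 * L + 1"
    proof -
      have "real_of_int \<lfloor>c + L\<rfloor> \<le> c + L" by (rule of_int_floor_le)
      moreover have "c - L \<le> real_of_int \<lceil>c - L\<rceil>" by (rule le_of_int_ceiling)
      ultimately show ?thesis by linarith
    qed
    moreover have "real (nat (\<lfloor>c + L\<rfloor> + 1 - \<lceil>c - L\<rceil>)) = max 0 (real_of_int (\<lfloor>c + L\<rfloor> + 1 - \<lceil>c - L\<rceil>))"
      by (simp add: max_def)
    ultimately show ?thesis using assms by simp
  qed
  finally show ?thesis .
qed

lemma sum_split_bound:
  fixes E1 E2 :: real
  assumes fI: "finite I" and E1: "E1 \<ge> 0" and E2: "E2 \<ge> 0"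
    and b: "\<And>i. i \<in> I \<Longrightarrow> f i \<le> (if P i then E1 else E2)"
  shows "(\<Sum>i\<in>I. f i) \<le> real (card {i \<in> I. P i}) * E1 + real (card I) * E2"
proof -
  have "(\<Sum>i\<in>I. f i) \<le> (\<Sum>i\<in>I. if P i then E1 else E2)" by (rule sum_mono) (rule b)
  also have "\<dots> = real (card (I \<inter> {i. P i})) * E1 + real (card (I \<inter> - {i. P i})) * E2"
    by (simp add: sum.If_cases[OF fI])
  also have "\<dots> \<le> real (card {i \<in> I. P i}) * E1 + real (card I) * E2"
  proof -
    have "I \<inter> {i. P i} = {i \<in> I. P i}" by auto
    moreover have "card (I \<inter> - {i. P i}) \<le> card I" by (rule card_mono[OF fI]) auto
    ultimately show ?thesis using E2 by (auto intro!: mult_right_mono)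
  qed
  finally show ?thesis .
qed


lemma qP_fin:
  assumes M: "M \<ge> 0" and g: "good M w"
  shows "qP w tau i s A = (\<Sum>y\<in>Rng M i s \<inter> A. qf w M tau i s y)"
proof -
  have "qP w tau i s A = (\<Sum>\<^sub>\<infinity>y\<in>A. qf w M tau i s y)"
  proof -
    have "qprob w tau i s = qf w M tau i s" by (rule ext) (rule qprob_qf[OF M g])
    then show ?thesis unfolding qP_def by simp
  qed
  also have "\<dots> = (\<Sum>\<^sub>\<infinity>y\<in>Rng M i s \<inter> A. qf w M tau i s y)"
    by (rule infsum_cong_neutral) (auto simp: qf_supp[OF M])
  also have "\<dots> = (\<Sum>y\<in>Rng M i s \<inter> A. qf w M tau i s y)"
    by (rule infsum_finite) (simp add: Rng_def)
  finally show ?thesis .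
qed

lemma infsum_supp:
  fixes f :: "int \<Rightarrow> real"
  assumes "finite I" "\<And>i. i \<notin> I \<Longrightarrow> f i = 0"
  shows "(\<Sum>\<^sub>\<infinity>i. f i) = (\<Sum>i\<in>I. f i)"
proof -
  have "(\<Sum>\<^sub>\<infinity>i. f i) = (\<Sum>\<^sub>\<infinity>i\<in>I. f i)"
    by (rule infsum_cong_neutral) (use assms in auto)
  also have "\<dots> = (\<Sum>i\<in>I. f i)" by (rule infsum_finite[OF assms(1)])
  finally show ?thesis .
qed

lemma holder_global:
  fixes \<rho> :: "real \<Rightarrow> real"
  assumes bdd: "bounded (range \<rho>)"
    and hoelder: "\<exists>\<gamma>>1/2. \<forall>a b. \<exists>C. \<forall>x\<in>{a..b}. \<forall>y\<in>{a..b}.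
                     \<bar>\<rho> x - \<rho> y\<bar> \<le> C * \<bar>x - y\<bar> powr \<gamma>"
  obtains \<gamma> C' B where "\<gamma> > 1/2" "C' \<ge> 0" "B \<ge> 0" "\<And>u. \<bar>\<rho> u\<bar> \<le> B"
    "\<And>u. \<bar>\<rho> u - \<rho> ybar\<bar> \<le> C' * \<bar>u - ybar\<bar> powr \<gamma>"
proof -
  obtain B where B: "\<And>u. \<bar>\<rho> u\<bar> \<le> B" using bdd unfolding bounded_iff by auto
  have B0: "B \<ge> 0" using B[of 0] by simp
  obtain \<gamma> where g: "\<gamma> > 1/2" and h: "\<forall>a b. \<exists>C. \<forall>x\<in>{a..b}. \<forall>y\<in>{a..b}. \<bar>\<rho> x - \<rho> y\<bar> \<le> C * \<bar>x - y\<bar> powr \<gamma>"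
    using hoelder by blast
  obtain C where C: "\<And>x y. x \<in> {ybar - 1..ybar + 1} \<Longrightarrow> y \<in> {ybar - 1..ybar + 1} \<Longrightarrow> \<bar>\<rho> x - \<rho> y\<bar> \<le> C * \<bar>x - y\<bar> powr \<gamma>"
    using h by blast
  define C' where "C' = max C (2 * B)"
  have "\<bar>\<rho> u - \<rho> ybar\<bar> \<le> C' * \<bar>u - ybar\<bar> powr \<gamma>" for u
  proof (cases "\<bar>u - ybar\<bar> \<le> 1")
    case True
    then have "\<bar>\<rho> u - \<rho> ybar\<bar> \<le> C * \<bar>u - ybar\<bar> powr \<gamma>" by (intro C) auto
    also have "\<dots> \<le> C' * \<bar>u - ybar\<bar> powr \<gamma>" by (intro mult_right_mono) (auto simp: C'_def)
    finally show ?thesis .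
  next
    case False
    have "\<bar>\<rho> u - \<rho> ybar\<bar> \<le> 2 * B" using B[of u] B[of ybar] by simp
    also have "\<dots> \<le> 2 * B * \<bar>u - ybar\<bar> powr \<gamma>"
    proof -
      have "1 \<le> \<bar>u - ybar\<bar> powr \<gamma>" using False g by (intro ge_one_powr_ge_zero) auto
      then show ?thesis using B0 by (simp add: mult_le_cancel_left1)
    qed
    also have "\<dots> \<le> C' * \<bar>u - ybar\<bar> powr \<gamma>" by (intro mult_right_mono) (auto simp: C'_def)
    finally show ?thesis .
  qed
  moreover have "C' \<ge> 0" using B0 by (simp add: C'_def)
  ultimately show ?thesis using that g B0 B by blast
qed

lemma floor_diff: "\<bar>real_of_int \<lfloor>z\<rfloor> - z\<bar> \<le> 1"
  by (smt (verit) of_int_floor_le real_of_int_floor_add_one_gt)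

lemma c_x_bound:
  fixes z V :: real assumes z: "z \<ge> 0"
  shows "\<bar>real_of_int \<lfloor>z * (- V)\<rfloor> + real (nat \<lfloor>z\<rfloor>) * V\<bar> \<le> 1 + \<bar>V\<bar>"
proof -
  have a: "\<bar>real_of_int \<lfloor>z * (- V)\<rfloor> - z * (- V)\<bar> \<le> 1" by (rule floor_diff)
  have "real (nat \<lfloor>z\<rfloor>) = real_of_int \<lfloor>z\<rfloor>" using z by simp
  then have "real (nat \<lfloor>z\<rfloor>) * V - z * V = V * (real_of_int \<lfloor>z\<rfloor> - z)"
    by (simp add: algebra_simps)
  then have "\<bar>real (nat \<lfloor>z\<rfloor>) * V - z * V\<bar> = \<bar>V\<bar> * \<bar>real_of_int \<lfloor>z\<rfloor> - z\<bar>"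
    by (simp add: abs_mult)
  also have "\<dots> \<le> \<bar>V\<bar> * 1" by (intro mult_left_mono floor_diff) auto
  finally have b: "\<bar>real (nat \<lfloor>z\<rfloor>) * V - z * V\<bar> \<le> \<bar>V\<bar>" by simp
  show ?thesis using a b by (simp add: abs_le_iff)
qed


context envsetup begin

definition LL :: "nat \<Rightarrow> real" where "LL n = 6 * sqrt (real n) * ln (real n)"

lemma exp_lam_LL: "n \<ge> 1 \<Longrightarrow> exp (- lam n * LL n) = 1 / real n ^ 6"
proof -
  assume n: "n \<ge> 1"
  have "lam n * LL n = 6 * ln (real n)" using n by (simp add: lam_def LL_def)
  then have "exp (- lam n * LL n) = inverse (exp (6 * ln (real n)))" by (simp add: exp_minus)
  also have "exp (6 * ln (real n)) = real n powr 6" using n by (simp add: powr_def)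
  also have "\<dots> = real n ^ 6" using n by (simp add: powr_numeral)
  finally show ?thesis by (simp add: inverse_eq_divide)
qed

lemma main_bound:
  fixes \<rho> :: "real \<Rightarrow> real" and ybar S T \<gamma> C' B t r :: real and n :: nat
  assumes g: "good M w" and n: "n \<ge> 1" and t: "0 \<le> t" "t \<le> T" and r: "- S \<le> r" "r \<le> S" and S: "S \<ge> 0"
    and nb: "\<forall>s \<le> Nn T n. \<forall>i\<in>{- Rn ybar S T n..Rn ybar S T n}. Phi w (lam n) (int s) i s < real n ^ 4"
    and LD: "1 + \<bar>VV\<bar> \<le> LL n"
    and hol: "\<And>u. \<bar>\<rho> u - \<rho> ybar\<bar> \<le> C' * \<bar>u - ybar\<bar> powr \<gamma>" and C': "C' \<ge> 0" and \<gamma>: "\<gamma> > 0"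
    and B: "\<And>u. \<bar>\<rho> u\<bar> \<le> B"
  shows "\<bar>Hn \<rho> w (- VV) ybar n t r - \<rho> ybar * EXc w (- VV) ybar n t r\<bar> \<le>
     (2 * LL n + 1) * (C' * ((LL n + (1 + \<bar>VV\<bar>) + S * sqrt (real n) + 2) / real n) powr \<gamma>)
     + (2 * (real n * T * \<bar>VV\<bar> + real_of_int M * real n * T + 2) + 1) * (2 * B / real n ^ 2)"
proof -
  define x where "x = xnr ybar n r"
  define i0 where "i0 = start (- VV) ybar n t r"
  define tau where "tau = tlab n t"
  define s where "s = nat tau"
  have T: "T \<ge> 0" using t by simp
  have n1: "real n \<ge> 1" using n by simp
  have tau0: "0 \<le> tau" unfolding tau_def tlab_def using t by simp
  have taus: "tau = int s" unfolding s_def using tau0 by simp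
  define q where "q = qf w M tau i0 s"
  define R where "R = Rng M i0 s"
  define K where "K = \<bar>x - i0\<bar> + M * int s + 1"
  define I where "I = {x - K..x + K}"
  have fR: "finite R" by (simp add: R_def Rng_def)
  have fI: "finite I" by (simp add: I_def)
  have RI: "R \<subseteq> {x - K..x + K}"
  proof
    fix y assume "y \<in> R"
    then have "\<bar>y - i0\<bar> \<le> M * int s" by (auto simp: R_def Rng_def abs_le_iff)
    then show "y \<in> {x - K..x + K}" unfolding K_def by auto
  qed
  have q0: "q y \<ge> 0" for y unfolding q_def by (rule qf_nonneg)
  have qs1: "(\<Sum>y\<in>R. q y) = 1" unfolding q_def R_def by (rule qf_sum1[OF M0 g])
  have Hn_eq: "Hn \<rho> w (- VV) ybar n t r = (\<Sum>i\<in>I. \<rho> (real_of_int i / real n) * Acoef q R x i)"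
  proof -
    have "Hn \<rho> w (- VV) ybar n t r = (\<Sum>\<^sub>\<infinity>i::int. \<rho> (real_of_int i / real n) * Acoef q R x i)"
      unfolding Hn_def Let_def x_def[symmetric] i0_def[symmetric] tau_def[symmetric] s_def[symmetric]
      unfolding qP_fin[OF M0 g] Acoef_def q_def R_def by simp
    also have "\<dots> = (\<Sum>i\<in>I. \<rho> (real_of_int i / real n) * Acoef q R x i)"
      by (rule infsum_supp[OF fI]) (simp add: I_def Acoef_zero[OF RI])
    finally show ?thesis .
  qed
  have EX_eq: "EXc w (- VV) ybar n t r = (\<Sum>i\<in>I. Acoef q R x i)"
  proof -
    have "EXc w (- VV) ybar n t r = (\<Sum>\<^sub>\<infinity>y::int. of_int (y - x) * q y)"
      unfolding EXc_def x_def[symmetric] i0_def[symmetric] tau_def[symmetric] s_def[symmetric] q_def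
      by (simp add: qprob_qf[OF M0 g])
    also have "\<dots> = (\<Sum>y\<in>R. of_int (y - x) * q y)"
      by (rule infsum_supp[OF fR]) (simp add: q_def R_def qf_supp[OF M0])
    also have "\<dots> = (\<Sum>i\<in>I. Acoef q R x i)" unfolding I_def by (rule Acoef_sum[OF RI, symmetric])
    finally show ?thesis .
  qed
  have diff: "Hn \<rho> w (- VV) ybar n t r - \<rho> ybar * EXc w (- VV) ybar n t r =
      (\<Sum>i\<in>I. (\<rho> (real_of_int i / real n) - \<rho> ybar) * Acoef q R x i)"
    unfolding Hn_eq EX_eq by (simp add: sum_distrib_left sum_subtractf left_diff_distrib)
  define c where "c = real_of_int i0 + real s * VV"
  have i0x: "i0 - x = \<lfloor>real n * t * - VV\<rfloor>" by (simp add: i0_def x_def start_def)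
  have s_eq: "s = nat \<lfloor>real n * t\<rfloor>" by (simp add: s_def tau_def tlab_def)
  have nt0: "real n * t \<ge> 0" using t by simp
  have cx: "\<bar>c - real_of_int x\<bar> \<le> 1 + \<bar>VV\<bar>"
  proof -
    have "c - real_of_int x = real_of_int \<lfloor>(real n * t) * (- VV)\<rfloor> + real (nat \<lfloor>real n * t\<rfloor>) * VV"
      unfolding c_def s_eq using i0x by (simp add: algebra_simps flip: of_int_diff)
    then show ?thesis using c_x_bound[OF nt0, of VV] by simp
  qed
  have fl1: "\<bar>real_of_int \<lfloor>real n * t * - VV\<rfloor>\<bar> \<le> real n * T * \<bar>VV\<bar> + 1"
  proof -
    have "\<bar>real_of_int \<lfloor>real n * t * - VV\<rfloor>\<bar> \<le> \<bar>real n * t * - VV\<bar> + 1"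
      using floor_diff[of "real n * t * - VV"] by linarith
    also have "\<bar>real n * t * - VV\<bar> = real n * t * \<bar>VV\<bar>" using t by (simp add: abs_mult)
    also have "real n * t * \<bar>VV\<bar> \<le> real n * T * \<bar>VV\<bar>" using t by (intro mult_right_mono mult_left_mono) auto
    finally show ?thesis by simp
  qed
  have xy: "\<bar>real_of_int x - real n * ybar\<bar> \<le> S * sqrt (real n) + 2"
  proof -
    have a: "\<bar>real_of_int \<lfloor>real n * ybar\<rfloor> - real n * ybar\<bar> \<le> 1" by (rule floor_diff)
    have b: "\<bar>real_of_int \<lfloor>r * sqrt (real n)\<rfloor> - r * sqrt (real n)\<bar> \<le> 1" by (rule floor_diff)
    have c: "\<bar>r * sqrt (real n)\<bar> \<le> S * sqrt (real n)"
      using r by (simp add: abs_mult mult_right_mono)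
    show ?thesis unfolding x_def xnr_def using a b c by (simp add: abs_le_iff) linarith
  qed
  have sT: "real s \<le> real n * T"
  proof -
    have "real s = real_of_int \<lfloor>real n * t\<rfloor>" unfolding s_eq using nt0 by simp
    also have "\<dots> \<le> real n * t" by simp
    also have "\<dots> \<le> real n * T" using t by (intro mult_left_mono) auto
    finally show ?thesis .
  qed
  have sN: "s \<le> Nn T n"
    unfolding s_eq Nn_def using t by (intro nat_mono floor_mono mult_left_mono) auto
  have i0R: "i0 \<in> {- Rn ybar S T n..Rn ybar S T n}"
  proof -
    have "\<bar>real_of_int i0\<bar> \<le> \<bar>real n * ybar\<bar> + S * sqrt (real n) + real n * T * \<bar>VV\<bar> + 3"
    proof -
      have "real_of_int i0 = real_of_int x + real_of_int \<lfloor>real n * t * - VV\<rfloor>" using i0x by simp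
      then show ?thesis using xy fl1 by (simp add: abs_le_iff) linarith
    qed
    also have "\<dots> \<le> real_of_int (Rn ybar S T n)" unfolding Rn_def by (rule le_of_int_ceiling)
    finally have "\<bar>real_of_int i0\<bar> \<le> real_of_int (Rn ybar S T n)" .
    then show ?thesis by (simp add: abs_le_iff)
  qed
  have Phib: "Phi w (lam n) tau i0 s < real n ^ 4" using nb sN i0R taus by auto
  have PhiEq: "Phi w (lam n) tau i0 s = (\<Sum>y\<in>R. q y * (exp (lam n * (of_int y - c)) + exp (- lam n * (of_int y - c))))"
    unfolding Phi_def q_def R_def c_def by simp
  have lpos: "lam n > 0" using n by (simp add: lam_def)
  define Q where "Q = LL n + (1 + \<bar>VV\<bar>) + S * sqrt (real n) + 2"
  define E1 where "E1 = C' * (Q / real n) powr \<gamma>"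
  define E2 where "E2 = 2 * B / real n ^ 2"
  have B0: "B \<ge> 0" using B[of 0] by simp
  have E10: "E1 \<ge> 0" unfolding E1_def using C' by simp
  have E20: "E2 \<ge> 0" unfolding E2_def using B0 by simp
  have pt: "\<bar>\<rho> (real_of_int i / real n) - \<rho> ybar\<bar> * \<bar>Acoef q R x i\<bar> \<le> (if \<bar>of_int i - c\<bar> \<le> LL n then E1 else E2)" for i
  proof (cases "\<bar>of_int i - c\<bar> \<le> LL n")
    case True
    have "\<bar>real_of_int i - real n * ybar\<bar> \<le> Q"
      using True cx xy unfolding Q_def by (simp add: abs_le_iff)
    moreover have "\<bar>real_of_int i / real n - ybar\<bar> = \<bar>real_of_int i - real n * ybar\<bar> / real n"
    proof -
      have "real_of_int i / real n - ybar = (real_of_int i - real n * ybar) / real n"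
        using n1 by (simp add: field_simps)
      then show ?thesis by simp
    qed
    ultimately have d: "\<bar>real_of_int i / real n - ybar\<bar> \<le> Q / real n"
      using n1 by (simp add: divide_right_mono)
    have "\<bar>\<rho> (real_of_int i / real n) - \<rho> ybar\<bar> \<le> E1"
    proof -
      have "\<bar>\<rho> (real_of_int i / real n) - \<rho> ybar\<bar> \<le> C' * \<bar>real_of_int i / real n - ybar\<bar> powr \<gamma>" by (rule hol)
      also have "\<dots> \<le> C' * (Q / real n) powr \<gamma>"
        by (intro mult_left_mono powr_mono2 d C') (use \<gamma> in auto)
      finally show ?thesis unfolding E1_def .
    qed
    moreover have "\<bar>Acoef q R x i\<bar> \<le> 1" by (rule Acoef_le1[OF fR q0 qs1])
    ultimately have "\<bar>\<rho> (real_of_int i / real n) - \<rho> ybar\<bar> * \<bar>Acoef q R x i\<bar> \<le> E1 * 1"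
      by (intro mult_mono E10) auto
    then show ?thesis using True by simp
  next
    case False
    have a: "\<bar>\<rho> (real_of_int i / real n) - \<rho> ybar\<bar> \<le> 2 * B"
      using B[of "real_of_int i / real n"] B[of ybar] by simp
    have "\<bar>Acoef q R x i\<bar> \<le> Phi w (lam n) tau i0 s * exp (- lam n * LL n)"
      unfolding PhiEq by (rule Acoef_far[OF fR q0 lpos cx LD]) (use False in simp)
    also have "\<dots> \<le> real n ^ 4 * (1 / real n ^ 6)"
      unfolding exp_lam_LL[OF n] using Phib by (intro mult_right_mono) auto
    also have "\<dots> = 1 / real n ^ 2" using n1 by (simp add: field_simps eval_nat_numeral)
    finally have b: "\<bar>Acoef q R x i\<bar> \<le> 1 / real n ^ 2" .
    have "\<bar>\<rho> (real_of_int i / real n) - \<rho> ybar\<bar> * \<bar>Acoef q R x i\<bar> \<le> (2 * B) * (1 / real n ^ 2)"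
      by (intro mult_mono a b) (use B0 in auto)
    then show ?thesis using False by (simp add: E2_def)
  qed
  have "\<bar>Hn \<rho> w (- VV) ybar n t r - \<rho> ybar * EXc w (- VV) ybar n t r\<bar> \<le>
      (\<Sum>i\<in>I. \<bar>\<rho> (real_of_int i / real n) - \<rho> ybar\<bar> * \<bar>Acoef q R x i\<bar>)"
    unfolding diff by (rule order_trans[OF sum_abs]) (simp add: abs_mult)
  also have "\<dots> \<le> real (card {i \<in> I. \<bar>of_int i - c\<bar> \<le> LL n}) * E1 + real (card I) * E2"
    by (rule sum_split_bound[OF fI E10 E20 pt])
  also have "\<dots> \<le> (2 * LL n + 1) * E1 + (2 * (real n * T * \<bar>VV\<bar> + real_of_int M * real n * T + 2) + 1) * E2"
  proof (intro add_mono mult_right_mono E10 E20)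
    show "real (card {i \<in> I. \<bar>of_int i - c\<bar> \<le> LL n}) \<le> 2 * LL n + 1"
      by (rule card_near) (use LD in auto)
    have K1: "real_of_int K \<le> real n * T * \<bar>VV\<bar> + real_of_int M * real n * T + 2"
    proof -
      have "real_of_int \<bar>x - i0\<bar> \<le> real n * T * \<bar>VV\<bar> + 1"
      proof -
        have "x - i0 = - \<lfloor>real n * t * - VV\<rfloor>" using i0x by simp
        then have "real_of_int \<bar>x - i0\<bar> = \<bar>real_of_int \<lfloor>real n * t * - VV\<rfloor>\<bar>" by simp
        then show ?thesis using fl1 by simp
      qed
      moreover have "real_of_int M * real s \<le> real_of_int M * (real n * T)"
        using sT M0 by (intro mult_left_mono) auto
      ultimately show ?thesis unfolding K_def by (simp add: algebra_simps)
    qed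
    have "card I = nat (2 * K + 1)" unfolding I_def by simp
    moreover have "K \<ge> 1" unfolding K_def using M0 by simp
    ultimately have "real (card I) = 2 * real_of_int K + 1" by simp
    then show "real (card I) \<le> 2 * (real n * T * \<bar>VV\<bar> + real_of_int M * real n * T + 2) + 1"
      using K1 by simp
  qed
  finally show ?thesis unfolding E1_def E2_def Q_def by simp
qed

end

lemma bnd_lim:
  fixes \<gamma> S D C B Q0 :: real
  assumes g: "\<gamma> > 1/2" and S: "S \<ge> 0" and D: "D \<ge> 0"
  shows "(\<lambda>n::nat. real n powr (-1/4) *
     ((2 * (6 * sqrt (real n) * ln (real n)) + 1) * (C * ((6 * sqrt (real n) * ln (real n) + D + S * sqrt (real n) + 2) / real n) powr \<gamma>)
     + (2 * (real n * Q0 + 2) + 1) * (2 * B / real n ^ 2))) \<longlonglongrightarrow> 0"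
proof -
  have l1: "(\<lambda>n::nat. real n powr (-1/4) * (12 * sqrt (real n) * ln (real n) + 1) * ((6 * sqrt (real n) * ln (real n) + D + S * sqrt (real n) + 2) / real n) powr \<gamma>) \<longlonglongrightarrow> 0"
    using g S D by real_asymp
  have l2: "(\<lambda>n::nat. real n powr (-1/4) * (2 * Q0 * real n + 5) / (real n)^2) \<longlonglongrightarrow> 0"
    by real_asymp
  have "(\<lambda>n::nat. C * (real n powr (-1/4) * (12 * sqrt (real n) * ln (real n) + 1) * ((6 * sqrt (real n) * ln (real n) + D + S * sqrt (real n) + 2) / real n) powr \<gamma>)
        + 2 * B * (real n powr (-1/4) * (2 * Q0 * real n + 5) / (real n)^2)) \<longlonglongrightarrow> C * 0 + 2 * B * 0"
    by (intro tendsto_add tendsto_mult l1 l2 tendsto_const)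
  moreover have "(\<lambda>n::nat. C * (real n powr (-1/4) * (12 * sqrt (real n) * ln (real n) + 1) * ((6 * sqrt (real n) * ln (real n) + D + S * sqrt (real n) + 2) / real n) powr \<gamma>)
        + 2 * B * (real n powr (-1/4) * (2 * Q0 * real n + 5) / (real n)^2)) =
     (\<lambda>n::nat. real n powr (-1/4) *
     ((2 * (6 * sqrt (real n) * ln (real n)) + 1) * (C * ((6 * sqrt (real n) * ln (real n) + D + S * sqrt (real n) + 2) / real n) powr \<gamma>)
     + (2 * (real n * Q0 + 2) + 1) * (2 * B / real n ^ 2)))"
    by (rule ext) (simp add: algebra_simps add_divide_distrib)
  ultimately show ?thesis by simp
qed

lemma LL_big: "eventually (\<lambda>n::nat. c \<le> 6 * sqrt (real n) * ln (real n)) sequentially"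
proof -
  have "filterlim (\<lambda>n::nat. 6 * sqrt (real n) * ln (real n)) at_top sequentially" by real_asymp
  then show ?thesis by (simp add: filterlim_at_top)
qed


theorem lemma7p2:
  fixes M :: int and \<mu> :: "(int \<Rightarrow> real) measure" and \<rho> :: "real \<Rightarrow> real"
    and ybar S T :: real
  assumes M: "M \<ge> 1"
    and prob: "prob_space \<mu>"
    and sets: "sets \<mu> = sets (PiM (UNIV :: int set) (\<lambda>_. borel))"
    and supp: "AE u in \<mu>. u \<in> probvec M"
    and A1: "\<not> (\<exists>h::int. h > 1 \<and> (\<exists>x::int. (\<Sum>\<^sub>\<infinity>k::int. envp \<mu> (x + k * h)) = 1))"
    and A2: "measure \<mu> {u \<in> space \<mu>. Max (u ` {-M..M}) < 1} > 0"
    and bdd: "bounded (range \<rho>)"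
    and hoelder: "\<exists>\<gamma>>1/2. \<forall>a b. \<exists>C. \<forall>x\<in>{a..b}. \<forall>y\<in>{a..b}.
                     \<bar>\<rho> x - \<rho> y\<bar> \<le> C * \<bar>x - y\<bar> powr \<gamma>"
    and S: "0 \<le> S" and T: "0 \<le> T"
  shows "AE w in PiM (UNIV :: (int \<times> int) set) (\<lambda>_. \<mu>).
           (\<lambda>n. SUP (t, r)\<in>{0..T} \<times> {-S..S}.
               real n powr (-1/4) *
               \<bar>Hn \<rho> w (- envV \<mu> M) ybar n t r - \<rho> ybar * EXc w (- envV \<mu> M) ybar n t r\<bar>)
           \<longlonglongrightarrow> 0"
proof -
  interpret E: envsetup M \<mu> by (rule envsetup.intro[OF M prob sets supp])
  obtain \<gamma> C' B where g: "\<gamma> > 1/2" and C': "C' \<ge> 0" and B0: "B \<ge> 0" and Bd: "\<And>u. \<bar>\<rho> u\<bar> \<le> B"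
    and hol: "\<And>u. \<bar>\<rho> u - \<rho> ybar\<bar> \<le> C' * \<bar>u - ybar\<bar> powr \<gamma>"
    using holder_global[OF bdd hoelder, where ybar = ybar] by blast
  define D where "D = 1 + \<bar>envV \<mu> M\<bar>"
  define Q0 where "Q0 = T * \<bar>envV \<mu> M\<bar> + real_of_int M * T"
  define bnd where "bnd = (\<lambda>n::nat. real n powr (-1/4) *
     ((2 * (6 * sqrt (real n) * ln (real n)) + 1) * (C' * ((6 * sqrt (real n) * ln (real n) + D + S * sqrt (real n) + 2) / real n) powr \<gamma>)
     + (2 * (real n * Q0 + 2) + 1) * (2 * B / real n ^ 2)))"
  have lim: "bnd \<longlonglongrightarrow> 0" unfolding bnd_def by (rule bnd_lim[OF g S]) (simp add: D_def)
  define A where "A = {0..T} \<times> {-S..S}"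
  have Ane: "A \<noteq> {}" using S T by (auto simp: A_def)
  have AE1: "AE w in E.PP. good M w" by (rule AE_good[OF prob supp])
  have AE2: "AE w in E.PP. eventually (\<lambda>n. w \<in> space E.PP - E.BadE ybar S T n) sequentially"
    by (rule E.AE_eventually_notbad[OF S T])
  show ?thesis using AE1 AE2
  proof eventually_elim
    case (elim w)
    have gw: "good M w" using elim(1) .
    define f where "f = (\<lambda>n::nat. \<lambda>(t, r). real n powr (-1/4) *
               \<bar>Hn \<rho> w (- envV \<mu> M) ybar n t r - \<rho> ybar * EXc w (- envV \<mu> M) ybar n t r\<bar>)"
    have ev: "eventually (\<lambda>n. n \<ge> 1 \<and> w \<in> space E.PP - E.BadE ybar S T n \<and> 1 + \<bar>envV \<mu> M\<bar> \<le> E.LL n) sequentially"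
      using elim(2) LL_big[of "1 + \<bar>envV \<mu> M\<bar>"] eventually_ge_at_top[of 1]
      by eventually_elim (auto simp: E.LL_def)
    have evb: "eventually (\<lambda>n. \<forall>p\<in>A. 0 \<le> f n p \<and> f n p \<le> bnd n) sequentially"
      using ev
    proof eventually_elim
      case (elim n)
      have n: "n \<ge> 1" using elim by simp
      have nb: "\<forall>s \<le> E.Nn T n. \<forall>i\<in>{- E.Rn ybar S T n..E.Rn ybar S T n}. E.Phi w (E.lam n) (int s) i s < real n ^ 4"
        using elim n by (auto simp: E.BadE_def not_le)
      show ?case
      proof
        fix p assume p: "p \<in> A"
        obtain t r where tr: "p = (t, r)" by (cases p)
        have t: "0 \<le> t" "t \<le> T" and r: "- S \<le> r" "r \<le> S" using p tr by (auto simp: A_def)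
        have mb: "\<bar>Hn \<rho> w (- envV \<mu> M) ybar n t r - \<rho> ybar * EXc w (- envV \<mu> M) ybar n t r\<bar> \<le>
           (2 * E.LL n + 1) * (C' * ((E.LL n + (1 + \<bar>envV \<mu> M\<bar>) + S * sqrt (real n) + 2) / real n) powr \<gamma>)
           + (2 * (real n * T * \<bar>envV \<mu> M\<bar> + real_of_int M * real n * T + 2) + 1) * (2 * B / real n ^ 2)"
          by (rule E.main_bound[OF gw n t r S nb _ hol C' _ Bd]) (use elim g in auto)
        also have "\<dots> = (2 * (6 * sqrt (real n) * ln (real n)) + 1) * (C' * ((6 * sqrt (real n) * ln (real n) + D + S * sqrt (real n) + 2) / real n) powr \<gamma>)
           + (2 * (real n * Q0 + 2) + 1) * (2 * B / real n ^ 2)"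
          by (simp add: E.LL_def D_def Q0_def algebra_simps)
        finally have "f n p \<le> bnd n"
          unfolding f_def bnd_def tr by (simp add: mult_left_mono)
        moreover have "0 \<le> f n p" unfolding f_def tr by simp
        ultimately show "0 \<le> f n p \<and> f n p \<le> bnd n" by simp
      qed
    qed
    have "(\<lambda>n. Sup (f n ` A)) \<longlonglongrightarrow> 0"
    proof (rule tendsto_sandwich[OF _ _ tendsto_const lim])
      show "eventually (\<lambda>n. 0 \<le> Sup (f n ` A)) sequentially"
        using evb
      proof eventually_elim
        case (elim n)
        obtain p where p: "p \<in> A" using Ane by blast
        have "bdd_above (f n ` A)" using elim by (auto intro: bdd_aboveI2)
        then have "f n p \<le> Sup (f n ` A)" using p by (intro cSUP_upper)
        then show ?case using elim p by force
      qed
      show "eventually (\<lambda>n. Sup (f n ` A) \<le> bnd n) sequentially"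
        using evb
      proof eventually_elim
        case (elim n)
        then show ?case using Ane by (intro cSUP_least) auto
      qed
    qed
    then show ?case unfolding f_def A_def .
  qed
qed


end
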